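(* Let $M$ be a proper metric space, $X_1,\dots,X_n$ a coarsely transverse collection of half spaces, and for $0\le k\le n-1$ let $\mathcal{X}_k=\partial X_{k+1}\Cap\dots\Cap\partial X_n$, and $\mathcal{X}_n=\{M\}$. Then for every $0\le k\le n$, $\mathbf 1\wedge X_1\wedge\dots\wedge X_k\in CX^k_\alpha(\mathcal{X}_k)$.
   Context: Borel sets are identified with indicator functions; $\mathbf 1$ is the constant function. For $Y\subseteq M$, $Y_R=\{x:d(x,Y)\le R\}$. Coarsely transverse half spaces: Borel sets with $\bigcap_i (X_i)_R\cap(X_i^c)_R$ bounded for all $R$. A big family is a collection of subsets closed under subsets, finite unions and thickenings; $\{Y\}=\{Z:Z\subseteq Y_R\text{ for some }R\}$; $\mathcal{X}\Cap\mathcal{Y}=\{X\cap Y:X\in\mathcal X, Y\in\mathcal Y\}$; $\partial X=\{X\}\Cap\{X^c\}$; $\{M\}$ is the family of all subsets. For a big family $\mathcal{Y}$, $CX^k_\alpha(\mathcal{Y})$ is the space of anti-symmetric locally bounded Borel functions $\theta:M^{k+1}\to\mathbb{C}$ such that $\mathrm{supp}(\theta)\cap\Delta_R\cap Y^{k+1}$ is bounded for all $R>0$ and $Y\in\mathcal{Y}$, where $M^{k+1}$ has the max metric and $\Delta_R$ is the $R$-thickening of the multi-diagonal. $f_0\wedge\dots\wedge f_k=\sum_{\sigma\in S_{k+1}}\mathrm{sgn}(\sigma)f_{\sigma_0}\otimes\dots\otimes f_{\sigma_k}$. *)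

theory Defs
  imports "HOL-Analysis.Analysis" "HOL-Probability.Probability" "HOL-Combinatorics.Permutations"
begin

text \<open>Points of M^(k+1) are extensional functions on indices 0..k.\<close>

definition pts :: "nat \<Rightarrow> (nat \<Rightarrow> 'a) set" where
  "pts k = PiE {..k} (\<lambda>_. UNIV)"

definition maxdist :: "nat \<Rightarrow> (nat \<Rightarrow> 'a::metric_space) \<Rightarrow> (nat \<Rightarrow> 'a) \<Rightarrow> real" where
  "maxdist k x y = Max ((\<lambda>i. dist (x i) (y i)) ` {..k})"

definition bounded_pts :: "nat \<Rightarrow> (nat \<Rightarrow> 'a::metric_space) set \<Rightarrow> bool" where
  "bounded_pts k S \<longleftrightarrow> (\<exists>c\<in>pts k. \<exists>r. \<forall>y\<in>S. maxdist k c y \<le> r)"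

text \<open>R-thickening Y_R = {x. d(x,Y) <= R}, with d(x,{}) = infinity.\<close>
definition thick :: "'a::metric_space set \<Rightarrow> real \<Rightarrow> 'a set" where
  "thick Y R = {x. Y \<noteq> {} \<and> infdist x Y \<le> R}"

definition coarsely_transverse :: "nat \<Rightarrow> (nat \<Rightarrow> 'a::metric_space set) \<Rightarrow> bool" where
  "coarsely_transverse n X \<longleftrightarrow>
     (\<forall>i\<in>{1..n}. X i \<in> sets borel) \<and>
     (\<forall>R. bounded (\<Inter>i\<in>{1..n}. thick (X i) R \<inter> thick (- X i) R))"

definition gen_family :: "'a::metric_space set \<Rightarrow> 'a set set" where
  "gen_family Y = {Z. \<exists>R. Z \<subseteq> thick Y R}"

definition cap_family :: "'a set set \<Rightarrow> 'a set set \<Rightarrow> 'a set set" where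
  "cap_family A B = {X \<inter> Y | X Y. X \<in> A \<and> Y \<in> B}"

definition bdry_family :: "'a::metric_space set \<Rightarrow> 'a set set" where
  "bdry_family X = cap_family (gen_family X) (gen_family (- X))"

text \<open>X_k = dX_{k+1} \<Cap> ... \<Cap> dX_n for k < n, and X_n = {M} (all subsets).\<close>
definition Xfam :: "nat \<Rightarrow> (nat \<Rightarrow> 'a::metric_space set) \<Rightarrow> nat \<Rightarrow> 'a set set" where
  "Xfam n X k = (if k = n then UNIV
     else {\<Inter>i\<in>{k+1..n}. Z i | Z. \<forall>i\<in>{k+1..n}. Z i \<in> bdry_family (X i)})"

definition wedge :: "nat \<Rightarrow> (nat \<Rightarrow> 'a \<Rightarrow> complex) \<Rightarrow> (nat \<Rightarrow> 'a) \<Rightarrow> complex" where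
  "wedge k f x = (\<Sum>\<sigma>\<in>{\<sigma>. \<sigma> permutes {..k}}. of_int (sign \<sigma>) * (\<Prod>i\<in>{..k}. f (\<sigma> i) (x i)))"

definition support_pts :: "nat \<Rightarrow> ((nat \<Rightarrow> 'a) \<Rightarrow> complex) \<Rightarrow> (nat \<Rightarrow> 'a) set" where
  "support_pts k \<theta> = {x \<in> pts k. \<theta> x \<noteq> 0}"

definition diag_thick :: "nat \<Rightarrow> real \<Rightarrow> (nat \<Rightarrow> 'a::metric_space) set" where
  "diag_thick k R = {y \<in> pts k. \<exists>p. \<forall>i\<in>{..k}. dist (y i) p \<le> R}"

definition CX :: "nat \<Rightarrow> 'a::metric_space set set \<Rightarrow> ((nat \<Rightarrow> 'a) \<Rightarrow> complex) set" where
  "CX k \<Y> = {\<theta>.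
     (\<forall>\<sigma>. \<sigma> permutes {..k} \<longrightarrow> (\<forall>x\<in>pts k. \<theta> (x \<circ> \<sigma>) = of_int (sign \<sigma>) * \<theta> x)) \<and>
     (\<forall>x\<in>pts k. \<exists>r>0. bounded (\<theta> ` {y\<in>pts k. maxdist k x y < r})) \<and>
     \<theta> \<in> borel_measurable (PiM {..k} (\<lambda>_. borel)) \<and>
     (\<forall>R>0. \<forall>Y\<in>\<Y>. bounded_pts k (support_pts k \<theta> \<inter> diag_thick k R \<inter> PiE {..k} (\<lambda>_. Y)))}"

end

theory Submission
  imports Defs
begin

lemma wedge_antisym:
  assumes s: "s permutes {..k}"
  shows "wedge k f (x \<circ> s) = of_int (sign s) * wedge k f x"
proof -
  have ps: "permutation s" using s permutation_permutes by blast
  have "wedge k f (x \<circ> s) = (\<Sum>t\<in>{t. t permutes {..k}}. of_int (sign t) * (\<Prod>i\<in>{..k}. f ((t \<circ> inv s) i) (x i)))"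
    unfolding wedge_def
  proof (rule sum.cong[OF refl])
    fix t assume "t \<in> {t. t permutes {..k}}"
    have "(\<Prod>i\<in>{..k}. f ((t \<circ> inv s) i) (x i)) = (\<Prod>i\<in>{..k}. f ((t \<circ> inv s) (s i)) (x (s i)))"
      using prod.permute[OF s, of "\<lambda>i. f ((t \<circ> inv s) i) (x i)"] by (simp add: o_def)
    also have "\<dots> = (\<Prod>i\<in>{..k}. f (t i) ((x \<circ> s) i))"
      using permutes_inverses[OF s] by simp
    finally show "of_int (sign t) * (\<Prod>i\<in>{..k}. f (t i) ((x \<circ> s) i)) = of_int (sign t) * (\<Prod>i\<in>{..k}. f ((t \<circ> inv s) i) (x i))"
      by simp
  qed
  also have "\<dots> = (\<Sum>u\<in>{t. t permutes {..k}}. of_int (sign (u \<circ> s)) * (\<Prod>i\<in>{..k}. f (u i) (x i)))"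
  proof (rule sum.reindex_bij_witness[where i="\<lambda>u. u \<circ> s" and j="\<lambda>t. t \<circ> inv s"])
    fix a assume a: "a \<in> {t. t permutes {..k}}"
    show "a \<circ> inv s \<circ> s = a" using permutes_inv_o[OF s] by (simp add: o_assoc[symmetric])
    show "a \<circ> inv s \<in> {t. t permutes {..k}}" using a permutes_compose[OF permutes_inv[OF s]] by simp
    show "of_int (sign (a \<circ> inv s \<circ> s)) * (\<Prod>i\<in>{..k}. f ((a \<circ> inv s) i) (x i)) = of_int (sign a) * (\<Prod>i\<in>{..k}. f ((a \<circ> inv s) i) (x i))"
      using permutes_inv_o[OF s] by (simp add: o_assoc[symmetric])
  next
    fix b assume b: "b \<in> {t. t permutes {..k}}"
    show "b \<circ> s \<circ> inv s = b" using permutes_inv_o[OF s] by (simp add: o_assoc[symmetric])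
    show "b \<circ> s \<in> {t. t permutes {..k}}" using b permutes_compose[OF s] by simp
  qed
  also have "\<dots> = of_int (sign s) * wedge k f x"
    unfolding wedge_def sum_distrib_left
  proof (rule sum.cong[OF refl])
    fix u assume "u \<in> {t. t permutes {..k}}"
    then have "permutation u" using permutation_permutes by blast
    then show "of_int (sign (u \<circ> s)) * (\<Prod>i\<in>{..k}. f (u i) (x i)) = of_int (sign s) * (of_int (sign u) * (\<Prod>i\<in>{..k}. f (u i) (x i)))"
      using sign_compose[OF _ ps] by simp
  qed
  finally show ?thesis .
qed

lemma wedge_zero_col:
  assumes j: "j \<le> k" and z: "\<forall>i\<le>k. f j (x i) = 0"
  shows "wedge k f x = 0"
  unfolding wedge_def
proof (rule sum.neutral, intro ballI)
  fix t assume "t \<in> {t. t permutes {..k}}"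
  then have t: "t permutes {..k}" by simp
  have "inv t j \<le> k" using permutes_in_image[OF permutes_inv[OF t]] j by simp
  moreover have "f (t (inv t j)) (x (inv t j)) = 0" using z calculation permutes_inverses[OF t] by simp
  ultimately show "of_int (sign t) * (\<Prod>i\<in>{..k}. f (t i) (x i)) = 0"
    by (metis (no_types, lifting) atMost_iff finite_atMost mult_eq_0_iff prod_zero_iff)
qed

lemma wedge_zero_eq:
  assumes a: "a \<le> k" and b: "b \<le> k" and ab: "a \<noteq> b" and z: "\<forall>i\<le>k. f a (x i) = f b (x i)"
  shows "wedge k f x = 0"
proof -
  let ?t = "Transposition.transpose a b"
  have tp: "?t permutes {..k}" by (intro permutes_swap_id) (use a b in auto)
  have "wedge k f x = (\<Sum>s\<in>{t. t permutes {..k}}. of_int (sign (?t \<circ> s)) * (\<Prod>i\<in>{..k}. f ((?t \<circ> s) i) (x i)))"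
    unfolding wedge_def
  proof (rule sum.reindex_bij_witness[where i="\<lambda>u. ?t \<circ> u" and j="\<lambda>u. ?t \<circ> u"])
    fix s assume "s \<in> {t. t permutes {..k}}"
    then show "?t \<circ> (?t \<circ> s) = s" "?t \<circ> s \<in> {t. t permutes {..k}}"
      using permutes_compose[OF _ tp] by (auto simp: o_assoc[symmetric])
    show "of_int (sign (?t \<circ> (?t \<circ> s))) * (\<Prod>i\<in>{..k}. f ((?t \<circ> (?t \<circ> s)) i) (x i)) =
          of_int (sign s) * (\<Prod>i\<in>{..k}. f (s i) (x i))" by (simp only: o_assoc transpose_comp_involutory id_o)
  qed (use tp in \<open>auto simp: o_assoc intro: permutes_compose\<close>)
  also have "\<dots> = - wedge k f x"
    unfolding wedge_def sum_negf[symmetric]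
  proof (rule sum.cong[OF refl])
    fix s assume "s \<in> {t. t permutes {..k}}"
    then have s: "s permutes {..k}" by simp
    then have "permutation s" using permutation_permutes by blast
    then have sg: "sign (?t \<circ> s) = - sign s"
    proof -
      have "sign (?t \<circ> s) = sign ?t * sign s" by (rule sign_compose[OF permutation_swap_id \<open>permutation s\<close>])
      then show ?thesis using sign_swap_id[of a b] ab by simp
    qed
    have "f ((?t \<circ> s) i) (x i) = f (s i) (x i)" if "i \<le> k" for i
      using z that permutes_in_image[OF s, of i] by (auto simp: Transposition.transpose_def)
    then have "(\<Prod>i\<in>{..k}. f ((?t \<circ> s) i) (x i)) = (\<Prod>i\<in>{..k}. f (s i) (x i))"
      by (intro prod.cong) auto
    then show "of_int (sign (?t \<circ> s)) * (\<Prod>i\<in>{..k}. f ((?t \<circ> s) i) (x i)) = - (of_int (sign s) * (\<Prod>i\<in>{..k}. f (s i) (x i)))"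
      using sg by simp
  qed
  finally show ?thesis by simp
qed

lemma wedge_cross:
  fixes X :: "nat \<Rightarrow> 'a set"
  assumes nz: "wedge k (\<lambda>i. if i = 0 then (\<lambda>_. 1) else indicator (X i)) x \<noteq> 0"
    and j: "1 \<le> j" "j \<le> k"
  shows "(\<exists>i\<le>k. x i \<in> X j) \<and> (\<exists>i\<le>k. x i \<notin> X j)"
proof (intro conjI; rule ccontr)
  let ?F = "\<lambda>i. if i = 0 then (\<lambda>_. 1) else (indicator (X i) :: 'a \<Rightarrow> complex)"
  assume "\<not> (\<exists>i\<le>k. x i \<in> X j)"
  then have "\<forall>i\<le>k. ?F j (x i) = 0" using j by (simp add: indicator_def)
  then have "wedge k ?F x = 0" by (rule wedge_zero_col[OF j(2)])
  then show False using nz by simp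
next
  let ?F = "\<lambda>i. if i = 0 then (\<lambda>_. 1) else (indicator (X i) :: 'a \<Rightarrow> complex)"
  assume "\<not> (\<exists>i\<le>k. x i \<notin> X j)"
  then have "\<forall>i\<le>k. ?F j (x i) = ?F 0 (x i)" using j by (simp add: indicator_def)
  moreover have "(0::nat) \<le> k" "j \<noteq> 0" using j by auto
  ultimately have "wedge k ?F x = 0" by (intro wedge_zero_eq[OF j(2), of 0 ?F x]) auto
  then show False using nz by simp
qed

lemma thick_mono: "r \<le> s \<Longrightarrow> thick A r \<subseteq> thick A s"
  unfolding thick_def by auto

lemma thick_near: "y \<in> thick A r \<Longrightarrow> dist p y \<le> s \<Longrightarrow> p \<in> thick A (r + s)"
  unfolding thick_def using infdist_triangle[of p A y] by auto

lemma mem_thick: "y \<in> A \<Longrightarrow> dist p y \<le> s \<Longrightarrow> 0 \<le> r \<Longrightarrow> p \<in> thick A (r + s)"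
  unfolding thick_def using infdist_le[of y A p] by auto

lemma wedge_norm:
  fixes X :: "nat \<Rightarrow> 'a set"
  shows "norm (wedge k (\<lambda>i. if i = 0 then (\<lambda>_. 1) else indicator (X i)) x) \<le> card {s. s permutes {..k}}"
proof -
  let ?F = "\<lambda>i. if i = 0 then (\<lambda>_. 1) else (indicator (X i) :: 'a \<Rightarrow> complex)"
  have "norm (wedge k ?F x) \<le> (\<Sum>s\<in>{s. s permutes {..k}}. norm (of_int (sign s) * (\<Prod>i\<in>{..k}. ?F (s i) (x i))))"
    unfolding wedge_def by (rule norm_sum)
  also have "\<dots> \<le> (\<Sum>s\<in>{s. s permutes {..k}}. 1)"
  proof (rule sum_mono)
    fix s :: "nat \<Rightarrow> nat"
    have "norm (\<Prod>i\<in>{..k}. ?F (s i) (x i)) = (\<Prod>i\<in>{..k}. norm (?F (s i) (x i)))"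
      by (rule prod_norm[symmetric])
    also have "\<dots> \<le> 1"
      by (rule prod_le_1) (auto simp: indicator_def)
    finally have "norm (\<Prod>i\<in>{..k}. ?F (s i) (x i)) \<le> 1" .
    moreover have "norm (of_int (sign s) :: complex) = 1"
      by (cases rule: sign_cases[of s]) auto
    ultimately show "norm (of_int (sign s) * (\<Prod>i\<in>{..k}. ?F (s i) (x i))) \<le> 1"
      by (simp add: norm_mult)
  qed
  finally show ?thesis by simp
qed

lemma wedge_meas:
  fixes X :: "nat \<Rightarrow> 'a::metric_space set"
  assumes "\<forall>i\<in>{1..k}. X i \<in> sets borel"
  shows "wedge k (\<lambda>i. if i = 0 then (\<lambda>_. 1) else indicator (X i)) \<in> borel_measurable (PiM {..k} (\<lambda>_. borel))"
proof -
  let ?F = "\<lambda>i. if i = 0 then (\<lambda>_. 1) else (indicator (X i) :: 'a \<Rightarrow> complex)"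
  have F: "?F m \<in> borel_measurable borel" if "m \<le> k" for m
    using assms that by (cases "m = 0") auto
  have c: "(\<lambda>x. ?F (s i) (x i)) \<in> borel_measurable (PiM {..k} (\<lambda>_. borel))"
    if "s permutes {..k}" "i \<le> k" for s i
    using measurable_compose[OF measurable_component_singleton[of i "{..k}" "\<lambda>_. borel"] F[of "s i"]]
      permutes_in_image[OF that(1), of i] that by auto
  have t: "(\<lambda>x. of_int (sign s) * (\<Prod>i\<in>{..k}. ?F (s i) (x i))) \<in> borel_measurable (PiM {..k} (\<lambda>_. borel))"
    if "s permutes {..k}" for s
  proof (rule borel_measurable_times)
    show "(\<lambda>x. \<Prod>i\<in>{..k}. ?F (s i) (x i)) \<in> borel_measurable (PiM {..k} (\<lambda>_. borel))"
      by (rule borel_measurable_prod) (rule c[OF that], simp)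
  qed simp
  show ?thesis
    unfolding wedge_def
    by (rule borel_measurable_sum) (rule t, simp)
qed

lemma Xfam_bound:
  fixes X :: "nat \<Rightarrow> 'a::metric_space set"
  assumes "k \<le> n" "Y \<in> Xfam n X k"
  shows "\<exists>r0\<ge>0. \<forall>y\<in>Y. \<forall>i\<in>{k+1..n}. y \<in> thick (X i) r0 \<and> y \<in> thick (- X i) r0"
proof (cases "k = n")
  case True
  then show ?thesis by (intro exI[of _ 0]) auto
next
  case False
  have "Y \<in> {\<Inter>i\<in>{k+1..n}. Z i | Z. \<forall>i\<in>{k+1..n}. Z i \<in> bdry_family (X i)}"
    using assms(2) unfolding Xfam_def if_not_P[OF False] .
  then obtain Z where Y: "Y = (\<Inter>i\<in>{k+1..n}. Z i)" and Z: "\<forall>i\<in>{k+1..n}. Z i \<in> bdry_family (X i)"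
    by blast
  have "\<forall>i\<in>{k+1..n}. \<exists>r. Z i \<subseteq> thick (X i) r \<and> Z i \<subseteq> thick (- X i) r"
  proof
    fix i assume "i \<in> {k+1..n}"
    then have "Z i \<in> cap_family (gen_family (X i)) (gen_family (- X i))"
      using Z unfolding bdry_family_def by blast
    then obtain A B where AB: "Z i = A \<inter> B" "A \<in> gen_family (X i)" "B \<in> gen_family (- X i)"
      unfolding cap_family_def by blast
    from AB(2) obtain R1 where R1: "A \<subseteq> thick (X i) R1" unfolding gen_family_def by blast
    from AB(3) obtain R2 where R2: "B \<subseteq> thick (- X i) R2" unfolding gen_family_def by blast
    note AB(1) R1 R2
    then show "\<exists>r. Z i \<subseteq> thick (X i) r \<and> Z i \<subseteq> thick (- X i) r"
      using thick_mono[of R1 "max R1 R2" "X i"] thick_mono[of R2 "max R1 R2" "- X i"]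
      by (intro exI[of _ "max R1 R2"]) auto
  qed
  then obtain rf where rf: "\<forall>i\<in>{k+1..n}. Z i \<subseteq> thick (X i) (rf i) \<and> Z i \<subseteq> thick (- X i) (rf i)"
    by (rule bchoice[THEN exE]) blast
  define r0 where "r0 = Max (insert 0 (rf ` {k+1..n}))"
  have le: "rf i \<le> r0" if "i \<in> {k+1..n}" for i
    unfolding r0_def using that by (intro Max_ge) auto
  have "0 \<le> r0" unfolding r0_def by (intro Max_ge) auto
  moreover have "\<forall>y\<in>Y. \<forall>i\<in>{k+1..n}. y \<in> thick (X i) r0 \<and> y \<in> thick (- X i) r0"
  proof (intro ballI)
    fix y i assume "y \<in> Y" "i \<in> {k+1..n}"
    then have "y \<in> Z i" using Y by auto
    then show "y \<in> thick (X i) r0 \<and> y \<in> thick (- X i) r0"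
      using rf \<open>i \<in> _\<close> le[OF \<open>i \<in> _\<close>] thick_mono[of "rf i" r0 "X i"] thick_mono[of "rf i" r0 "- X i"]
      by blast
  qed
  ultimately show ?thesis by blast
qed

lemma CX_intro:
  assumes "\<And>\<sigma> x. \<sigma> permutes {..k} \<Longrightarrow> \<theta> (x \<circ> \<sigma>) = of_int (sign \<sigma>) * \<theta> x"
    and "\<And>x. \<exists>r>0. bounded (\<theta> ` {y\<in>pts k. maxdist k x y < r})"
    and "\<theta> \<in> borel_measurable (PiM {..k} (\<lambda>_. borel))"
    and "\<And>R Y. R > 0 \<Longrightarrow> Y \<in> \<Y> \<Longrightarrow> bounded_pts k (support_pts k \<theta> \<inter> diag_thick k R \<inter> PiE {..k} (\<lambda>_. Y))"
  shows "\<theta> \<in> CX k \<Y>"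
  unfolding CX_def using assms by blast

theorem lemma5p1:
  fixes X :: "nat \<Rightarrow> 'a::metric_space set" and n :: nat
  assumes proper: "\<forall>(x::'a) r. compact (cball x r)"
    and transverse: "coarsely_transverse n X"
  shows "\<forall>k\<le>n. wedge k (\<lambda>i. if i = 0 then (\<lambda>_. 1) else indicator (X i)) \<in> CX k (Xfam n X k)"
proof (intro allI impI)
  fix k assume kn: "k \<le> n"
  let ?F = "\<lambda>i. if i = 0 then (\<lambda>_. 1) else (indicator (X i) :: 'a \<Rightarrow> complex)"
  let ?\<theta> = "wedge k ?F"
  have bor: "\<forall>i\<in>{1..n}. X i \<in> sets borel" and bd: "\<And>R. bounded (\<Inter>i\<in>{1..n}. thick (X i) R \<inter> thick (- X i) R)"
    using transverse unfolding coarsely_transverse_def by auto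
  have B: "\<exists>r>0. bounded (?\<theta> ` {y\<in>pts k. maxdist k x y < r})" for x
  proof -
    have "bounded (?\<theta> ` {y\<in>pts k. maxdist k x y < 1})"
      unfolding bounded_iff using wedge_norm[of k X] by blast
    then show "\<exists>r>0. bounded (?\<theta> ` {y\<in>pts k. maxdist k x y < r})" by (intro exI[of _ 1]) auto
  qed
  have C: "?\<theta> \<in> borel_measurable (PiM {..k} (\<lambda>_. borel))"
    using wedge_meas[of k X] bor kn by auto
  have D: "bounded_pts k (support_pts k ?\<theta> \<inter> diag_thick k R \<inter> PiE {..k} (\<lambda>_. Y))"
    if R: "R > 0" and Y: "Y \<in> Xfam n X k" for R Y
  proof -
    obtain r0 where r0: "r0 \<ge> 0" "\<forall>y\<in>Y. \<forall>i\<in>{k+1..n}. y \<in> thick (X i) r0 \<and> y \<in> thick (- X i) r0"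
      using Xfam_bound[OF kn Y] by blast
    let ?B = "\<Inter>i\<in>{1..n}. thick (X i) (r0 + R) \<inter> thick (- X i) (r0 + R)"
    obtain a e where ae: "\<forall>z\<in>?B. dist a z \<le> e"
      using bd[of "r0 + R"] unfolding bounded_def by blast
    define c where "c = (\<lambda>i. if i \<le> k then a else undefined)"
    have cp: "c \<in> pts k" unfolding c_def pts_def PiE_def extensional_def by auto
    have "maxdist k c y \<le> e + R" if y: "y \<in> support_pts k ?\<theta> \<inter> diag_thick k R \<inter> PiE {..k} (\<lambda>_. Y)" for y
    proof -
      have nz: "?\<theta> y \<noteq> 0" using y unfolding support_pts_def by auto
      obtain p where p: "\<forall>i\<in>{..k}. dist (y i) p \<le> R" using y unfolding diag_thick_def by auto
      have y0: "y 0 \<in> Y" using y by (auto simp: PiE_iff)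
      have pB: "p \<in> thick (X i) (r0 + R) \<and> p \<in> thick (- X i) (r0 + R)" if i: "i \<in> {1..n}" for i
      proof -
        show "p \<in> thick (X i) (r0 + R) \<and> p \<in> thick (- X i) (r0 + R)"
        proof (cases "i \<le> k")
          case True
          then obtain i1 i2 where "i1 \<le> k" "y i1 \<in> X i" "i2 \<le> k" "y i2 \<notin> X i"
            using wedge_cross[OF nz, of i] i by auto
          moreover have "dist p (y i1) \<le> R" "dist p (y i2) \<le> R"
            using p calculation by (auto simp: dist_commute)
          ultimately show ?thesis using mem_thick[of "y i1" "X i" p R r0] mem_thick[of "y i2" "- X i" p R r0] r0(1)
            by auto
        next
          case False
          then have "i \<in> {k+1..n}" using i by auto
          then have "y 0 \<in> thick (X i) r0" "y 0 \<in> thick (- X i) r0" using r0(2) y0 by auto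
          moreover have "dist p (y 0) \<le> R" using p by (auto simp: dist_commute)
          ultimately show ?thesis using thick_near[of "y 0" "X i" r0 p R] thick_near[of "y 0" "- X i" r0 p R] by blast
        qed
      qed
      then have "p \<in> ?B" by blast
      then have ap: "dist a p \<le> e" using ae by blast
      have "dist (c i) (y i) \<le> e + R" if "i \<in> {..k}" for i
      proof -
        have "dist (c i) (y i) = dist a (y i)" using that by (simp add: c_def)
        also have "\<dots> \<le> dist a p + dist p (y i)" by (rule dist_triangle)
        also have "\<dots> \<le> e + R" using ap p that by (simp add: dist_commute add_mono)
        finally show ?thesis .
      qed
      then show ?thesis unfolding maxdist_def by (subst Max_le_iff) auto
    qed
    then show ?thesis unfolding bounded_pts_def using cp by blast
  qed
  show "?\<theta> \<in> CX k (Xfam n X k)"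
  proof (rule CX_intro[where \<theta>="?\<theta>" and k=k])
    show "?\<theta> (x \<circ> \<sigma>) = of_int (sign \<sigma>) * ?\<theta> x" if "\<sigma> permutes {..k}" for \<sigma> x
      by (rule wedge_antisym[OF that])
  qed (rule B, rule C, rule D)
qed

end
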